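(* For all integers $k\geq 1$, $V(F_{2k})=V(F_{2k+1})=F_{2k-2}+1$.
   Context: Fibonacci numbers: $F_0=0$, $F_1=1$, $F_{m+2}=F_{m+1}+F_m$. Standard Fibonacci words: $f_{-1}=b$, $f_0=a$, $f_{m+1}=f_mf_{m-1}$. The Fibonacci word ${\bf f}=\lim f_m=abaababa\cdots$, with prefix of length $j$ denoted ${\bf f}(0..j]$. $V(N)$ is the number of factorizations of ${\bf f}(0..N]$ as $f_m^{k_m}\cdots f_0^{k_0}$ with all $k_i\geq 0$ (into standard words $f_i$, $i\geq0$, in non-strictly decreasing order of index), counted up to leading zero exponents; $V(0)=1$. *)

theory Defs
  imports Main "HOL-Number_Theory.Fib"
begin

datatype letter = La | Lb

text \<open>Standard Fibonacci words: fw i = f_i for i \<ge> 0, where f_{-1} = b, f_0 = a,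
  f_{m+1} = f_m f_{m-1}.  Hence f_1 = ab and f_{i+2} = f_{i+1} f_i.\<close>
fun fw :: "nat \<Rightarrow> letter list" where
  "fw 0 = [La]"
| "fw (Suc 0) = [La, Lb]"
| "fw (Suc (Suc n)) = fw (Suc n) @ fw n"

text \<open>Prefix of length N of the infinite Fibonacci word (fw N has length F_{N+2} \<ge> N,
  and each fw n is a prefix of fw (n+1)).\<close>
definition fprefix :: "nat \<Rightarrow> letter list" where
  "fprefix N = take N (fw N)"

text \<open>The word f_m^{k_m} ... f_0^{k_0} for the exponent list ks = [k_0, ..., k_m].\<close>
definition fact_word :: "nat list \<Rightarrow> letter list" where
  "fact_word ks = concat (map (\<lambda>i. concat (replicate (ks ! i) (fw i))) (rev [0..<length ks]))"

text \<open>Factorizations counted up to leading zero exponents: normalize by requiring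
  the highest-index exponent to be nonzero (the empty list is the empty factorization).\<close>
definition V :: "nat \<Rightarrow> nat" where
  "V N = card {ks. (ks = [] \<or> last ks \<noteq> 0) \<and> fact_word ks = fprefix N}"

end

theory Submission
  imports Defs
begin

fun phi :: "letter list \<Rightarrow> letter list" where
  "phi [] = []"
| "phi (La # w) = La # Lb # phi w"
| "phi (Lb # w) = La # phi w"

lemma phi_append[simp]: "phi (u @ v) = phi u @ phi v"
  by (induction u rule: phi.induct) auto

lemma phi_concat: "phi (concat xs) = concat (map phi xs)"
  by (induction xs) auto

lemma phi_replicate_b[simp]: "phi (replicate k Lb) = replicate k La"
  by (induction k) auto

lemma phi_Nil_iff[simp]: "phi w = [] \<longleftrightarrow> w = []"
  by (cases w rule: phi.cases) auto

lemma phi_not_Lb_Cons: "phi v \<noteq> Lb # w"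
  by (cases v rule: phi.cases) auto

lemma phi_not_Lb_Cons2: "Lb # w \<noteq> phi v"
  using phi_not_Lb_Cons by metis

lemma phi_inj: "phi u = phi v \<Longrightarrow> u = v"
proof (induction u arbitrary: v rule: phi.induct)
  case 1
  then show ?case by (metis phi_Nil_iff)
next
  case (2 w)
  then show ?case
    by (cases v rule: phi.cases) (auto simp: phi_not_Lb_Cons phi_not_Lb_Cons2)
next
  case (3 w)
  then show ?case
    by (cases v rule: phi.cases) (auto simp: phi_not_Lb_Cons phi_not_Lb_Cons2)
qed

lemma phi_not_bb: "phi y \<noteq> u @ [Lb, Lb]"
proof (induction y rule: rev_induct)
  case Nil
  then show ?case by simp
next
  case (snoc x xs)
  show ?case
  proof (cases x)
    case La
    then show ?thesis
      by (metis append.assoc append_Cons append_Nil letter.distinct(1) last_ConsR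
          last_snoc list.discI butlast_snoc phi.simps(1) phi.simps(2) phi_append)
  next
    case Lb
    then show ?thesis by simp
  qed
qed

lemma fw_phi: "fw (Suc i) = phi (fw i)"
proof (induction i rule: less_induct)
  case (less i)
  show ?case
  proof (cases i)
    case 0
    then show ?thesis by simp
  next
    case (Suc j)
    show ?thesis
    proof (cases j)
      case 0
      then show ?thesis using Suc by simp
    next
      case (Suc j')
      have h1: "fw (Suc (Suc j')) = phi (fw (Suc j'))" by (rule less.IH) (simp add: Suc \<open>i = Suc j\<close>)
      have h2: "fw (Suc j') = phi (fw j')" by (rule less.IH) (simp add: Suc \<open>i = Suc j\<close>)
      show ?thesis using h1 h2 Suc \<open>i = Suc j\<close> by (metis fw.simps(3) phi_append)
    qed
  qed
qed

lemma phi_concat_replicate: "phi (concat (replicate j w)) = concat (replicate j (phi w))"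
  by (simp add: phi_concat map_replicate)

lemma fact_word_Nil[simp]: "fact_word [] = []"
  by (simp add: fact_word_def)

lemma fact_word_Cons: "fact_word (k # ks) = phi (fact_word ks) @ replicate k La"
proof -
  let ?n = "length ks"
  have r: "rev [0..<Suc ?n] = map Suc (rev [0..<?n]) @ [0]"
  proof -
    have "[0..<Suc ?n] = 0 # map Suc [0..<?n]"
      by (simp add: upt_conv_Cons map_Suc_upt del: upt_Suc)
    then show ?thesis by (simp add: rev_map)
  qed
  have "fact_word (k # ks) = concat (map (\<lambda>i. concat (replicate ((k # ks) ! i) (fw i))) (map Suc (rev [0..<?n]) @ [0]))"
    unfolding fact_word_def using r by simp
  also have "\<dots> = concat (map (\<lambda>i. concat (replicate (ks ! i) (fw (Suc i)))) (rev [0..<?n])) @ replicate k La"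
    by (simp add: concat_replicate_trivial comp_def)
  also have "concat (map (\<lambda>i. concat (replicate (ks ! i) (fw (Suc i)))) (rev [0..<?n]))
      = phi (fact_word ks)"
    unfolding fact_word_def phi_concat by (simp add: fw_phi phi_concat_replicate comp_def)
  finally show ?thesis .
qed

definition Fac :: "letter list \<Rightarrow> nat list set" where
  "Fac w = {ks. (ks = [] \<or> last ks \<noteq> 0) \<and> fact_word ks = w}"

lemma Fac_Cons:
  assumes "w \<noteq> []"
  shows "Fac w = {k # ks | k ks. \<exists>y. ks \<in> Fac y \<and> w = phi y @ replicate k La}"
proof
  show "Fac w \<subseteq> {k # ks | k ks. \<exists>y. ks \<in> Fac y \<and> w = phi y @ replicate k La}"
  proof
    fix ks assume "ks \<in> Fac w"
    then have ks: "ks = [] \<or> last ks \<noteq> 0" "fact_word ks = w" by (auto simp: Fac_def)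
    then have "ks \<noteq> []" using assms by auto
    then obtain k ks' where kk: "ks = k # ks'" by (cases ks) auto
    have "ks' \<in> Fac (fact_word ks')"
      using ks kk by (cases ks') (auto simp: Fac_def)
    moreover have "w = phi (fact_word ks') @ replicate k La"
      using ks kk by (simp add: fact_word_Cons)
    ultimately show "ks \<in> {k # ks | k ks. \<exists>y. ks \<in> Fac y \<and> w = phi y @ replicate k La}"
      using kk by blast
  qed
next
  show "{k # ks | k ks. \<exists>y. ks \<in> Fac y \<and> w = phi y @ replicate k La} \<subseteq> Fac w"
  proof
    fix x assume "x \<in> {k # ks | k ks. \<exists>y. ks \<in> Fac y \<and> w = phi y @ replicate k La}"
    then obtain k ks y where x: "x = k # ks" "ks \<in> Fac y" "w = phi y @ replicate k La" by blast
    have fw: "fact_word ks = y" using x by (simp add: Fac_def)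
    have "last x \<noteq> 0"
    proof (cases "ks = []")
      case True
      then have "y = []" using fw by simp
      then have "k \<noteq> 0" using x assms by auto
      then show ?thesis using True x by simp
    next
      case False
      then show ?thesis using x by (simp add: Fac_def)
    qed
    then show "x \<in> Fac w" using x fw by (simp add: Fac_def fact_word_Cons)
  qed
qed

lemma dec:
  assumes "Y = [] \<or> last Y = La"
  shows "(phi y @ replicate k La = phi Y @ replicate K La) \<longleftrightarrow> (k \<le> K \<and> y = Y @ replicate (K - k) Lb)"
proof
  assume h: "phi y @ replicate k La = phi Y @ replicate K La"
  show "k \<le> K \<and> y = Y @ replicate (K - k) Lb"
  proof (cases "k \<le> K")
    case True
    have "replicate K La = replicate (K - k) La @ replicate k La"
      using True by (metis le_add_diff_inverse2 replicate_add)
    then have "phi y = phi Y @ replicate (K - k) La" using h by simp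
    then have "phi y = phi (Y @ replicate (K - k) Lb)" by simp
    then show ?thesis using True phi_inj by blast
  next
    case False
    have "replicate k La = replicate (k - K) La @ replicate K La"
      using False by (metis le_add_diff_inverse2 nat_le_linear replicate_add)
    then have "phi y @ replicate (k - K) La = phi Y" using h by simp
    then have "phi (y @ replicate (k - K) Lb) = phi Y" by simp
    then have "Y = y @ replicate (k - K) Lb" using phi_inj by metis
    moreover have "k - K > 0" using False by simp
    ultimately have "Y \<noteq> [] \<and> last Y = Lb"
      by (metis append_is_Nil_conv gr0_conv_Suc last_appendR last_replicate replicate_empty
          less_numeral_extra(3))
    then show ?thesis using assms by auto
  qed
next
  assume "k \<le> K \<and> y = Y @ replicate (K - k) Lb"
  then show "phi y @ replicate k La = phi Y @ replicate K La"
    by (simp flip: replicate_add)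
qed

lemma phi_hd: "y \<noteq> [] \<Longrightarrow> hd (phi y) = La"
  by (cases y rule: phi.cases) auto

lemma Fac_hd_b:
  assumes "w \<noteq> []" "hd w = Lb"
  shows "Fac w = {}"
proof (rule ccontr)
  assume "Fac w \<noteq> {}"
  then obtain ks where "ks \<in> Fac w" by blast
  then obtain k y where w: "w = phi y @ replicate k La"
    using Fac_Cons[OF assms(1)] by blast
  show False
  proof (cases "y = []")
    case True
    then show False using w assms by (cases k) auto
  next
    case False
    then show False using w assms phi_hd by (simp add: hd_append)
  qed
qed

lemma Fac_bb: "Fac (u @ [Lb, Lb]) = {}"
proof (rule ccontr)
  assume "Fac (u @ [Lb, Lb]) \<noteq> {}"
  then obtain ks where "ks \<in> Fac (u @ [Lb, Lb])" by blast
  then obtain k y where w: "u @ [Lb, Lb] = phi y @ replicate k La"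
    using Fac_Cons[of "u @ [Lb, Lb]"] by blast
  have "k = 0"
  proof (rule ccontr)
    assume "k \<noteq> 0"
    then have "last (phi y @ replicate k La) = La" by simp
    then show False using w by (metis last_snoc letter.distinct(1) append.assoc append_Cons append_Nil)
  qed
  then show False using w phi_not_bb[of y u] by simp
qed

lemma fact_word_Nil_iff: "fact_word ks = [] \<longleftrightarrow> (\<forall>x\<in>set ks. x = 0)"
  by (induction ks) (auto simp: fact_word_Cons)

lemma Fac_Nil: "Fac [] = {[]}"
proof -
  have "ks = []" if "ks \<in> Fac []" for ks
  proof (rule ccontr)
    assume ne: "ks \<noteq> []"
    have "fact_word ks = []" "last ks \<noteq> 0" using that ne by (auto simp: Fac_def)
    then show False using fact_word_Nil_iff[of ks] last_in_set[OF ne] by auto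
  qed
  then show ?thesis by (auto simp: Fac_def)
qed

lemma length_phi: "length y \<le> length (phi y)"
  by (induction y rule: phi.induct) auto

lemma length_phi_La: "La \<in> set y \<Longrightarrow> length y < length (phi y)"
  by (induction y rule: phi.induct) (auto simp: length_phi less_Suc_eq_le)

lemma UNIV_letter: "(UNIV :: letter set) = {La, Lb}"
  using letter.exhaust by auto

lemma finite_Fac: "finite (Fac w)"
proof (induction "length w" arbitrary: w rule: less_induct)
  case less
  show ?case
  proof (cases "w = []")
    case True
    then show ?thesis by (simp add: Fac_Nil)
  next
    case False
    let ?D = "{(k, y). w = phi y @ replicate k La}"
    have D: "?D \<subseteq> {..length w} \<times> {y. set y \<subseteq> UNIV \<and> length y \<le> length w}"
    proof
      fix p assume "p \<in> ?D"
      then obtain k y where "p = (k, y)" "w = phi y @ replicate k La" by blast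
      then show "p \<in> {..length w} \<times> {y. set y \<subseteq> UNIV \<and> length y \<le> length w}"
        using length_phi[of y] by auto
    qed
    have "finite ({..length w} \<times> {y::letter list. set y \<subseteq> UNIV \<and> length y \<le> length w})"
      by (intro finite_cartesian_product finite_lists_length_le) (auto simp: UNIV_letter)
    then have fD: "finite ?D" using D finite_subset by blast
    have eq: "Fac w = (\<Union>p\<in>?D. Cons (fst p) ` Fac (snd p))"
      using Fac_Cons[OF False] by auto
    have "finite (Fac y)" if "(k, y) \<in> ?D" for k y
    proof (cases "length y < length w")
      case True
      then show ?thesis using less by blast
    next
      case False
      have w: "w = phi y @ replicate k La" using that by simp
      then have "length y = length w" "k = 0" "length (phi y) = length y"
        using False length_phi[of y] by auto
      then have "La \<notin> set y" using length_phi_La by fastforce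
      moreover have "y \<noteq> []" using w \<open>k = 0\<close> \<open>w \<noteq> []\<close> by auto
      ultimately have "hd y = Lb" by (metis hd_in_set letter.exhaust)
      then show ?thesis using Fac_hd_b \<open>y \<noteq> []\<close> by simp
    qed
    then show ?thesis unfolding eq using fD by auto
  qed
qed

lemma card_Fac_dec:
  assumes "Y = [] \<or> last Y = La" "phi Y @ replicate K La \<noteq> []"
  shows "card (Fac (phi Y @ replicate K La)) = (\<Sum>k\<le>K. card (Fac (Y @ replicate (K - k) Lb)))"
proof -
  have eq: "Fac (phi Y @ replicate K La) = (\<Union>k\<in>{..K}. Cons k ` Fac (Y @ replicate (K - k) Lb))"
  proof -
    have dd: "\<And>y k. (phi Y @ replicate K La = phi y @ replicate k La) = (k \<le> K \<and> y = Y @ replicate (K - k) Lb)"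
      using dec[OF assms(1)] by metis
    show ?thesis unfolding Fac_Cons[OF assms(2)] dd by auto
  qed
  have "card (\<Union>k\<in>{..K}. Cons k ` Fac (Y @ replicate (K - k) Lb))
      = (\<Sum>k\<le>K. card (Cons k ` Fac (Y @ replicate (K - k) Lb)))"
    by (rule card_UN_disjoint) (auto simp: finite_Fac)
  also have "\<dots> = (\<Sum>k\<le>K. card (Fac (Y @ replicate (K - k) Lb)))"
    by (intro sum.cong refl card_image) (simp add: inj_on_def)
  finally show ?thesis using eq by simp
qed

fun c :: "nat \<Rightarrow> letter list" where
  "c 0 = []"
| "c (Suc m) = phi (c m) @ [La]"

lemma c_last: "c m = [] \<or> last (c m) = La"
  by (cases m) auto

lemma fw_c: "fw (Suc m) = c m @ (if even m then [La, Lb] else [Lb, La])"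
proof (induction m)
  case 0
  then show ?case by simp
next
  case (Suc m)
  have "fw (Suc (Suc m)) = phi (fw (Suc m))" by (rule fw_phi)
  then show ?case using Suc by auto
qed

lemma t1: "card (Fac (c (Suc m))) = card (Fac (c m @ [Lb])) + card (Fac (c m))"
proof -
  have "c (Suc m) = phi (c m) @ replicate 1 La" by simp
  then show ?thesis using card_Fac_dec[OF c_last, of m 1] by simp
qed

lemma t2: "card (Fac (c (Suc m) @ [La])) = card (Fac (c m @ [Lb])) + card (Fac (c m))"
proof -
  have e: "c (Suc m) @ [La] = phi (c m) @ replicate 2 La" by (simp add: numeral_2_eq_2)
  have "card (Fac (phi (c m) @ replicate 2 La)) = (\<Sum>k\<le>2. card (Fac (c m @ replicate (2 - k) Lb)))"
    using card_Fac_dec[OF c_last, of m 2] by simp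
  also have "\<dots> = card (Fac (c m @ [Lb, Lb])) + card (Fac (c m @ [Lb])) + card (Fac (c m))"
    by (simp add: numeral_2_eq_2)
  finally show ?thesis using e by (simp add: Fac_bb)
qed

lemma t3: "card (Fac (c (Suc m) @ [Lb])) = card (Fac (c m @ [La]))"
proof -
  have e: "c (Suc m) @ [Lb] = phi (c m @ [La]) @ replicate 0 La" by simp
  show ?thesis unfolding e using card_Fac_dec[of "c m @ [La]" 0] by simp
qed

lemma t4: "card (Fac (c (Suc m) @ [La, Lb])) = card (Fac (c m @ [Lb, La]))"
proof -
  have e: "c (Suc m) @ [La, Lb] = phi (c m @ [Lb, La]) @ replicate 0 La" by simp
  show ?thesis unfolding e using card_Fac_dec[of "c m @ [Lb, La]" 0] by simp
qed

lemma t5: "card (Fac (c (Suc m) @ [Lb, La])) = card (Fac (c m @ [La, Lb])) + card (Fac (c m @ [La]))"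
proof -
  have e: "c (Suc m) @ [Lb, La] = phi (c m @ [La]) @ replicate 1 La" by simp
  show ?thesis unfolding e using card_Fac_dec[of "c m @ [La]" 1] by simp
qed

lemma card_Fac_Nil: "card (Fac []) = 1"
  by (simp add: Fac_Nil)

lemma card_Fac_b: "card (Fac (Lb # w)) = 0"
  using Fac_hd_b[of "Lb # w"] by simp

lemma card_Fac_a: "card (Fac [La]) = 1"
proof -
  have e: "[La] = phi [] @ replicate 1 La" by simp
  show ?thesis unfolding e using card_Fac_dec[of "[]" 1] by (simp add: card_Fac_b card_Fac_Nil)
qed

lemma card_Fac_ab: "card (Fac [La, Lb]) = 1"
proof -
  have e: "[La, Lb] = phi [La] @ replicate 0 La" by simp
  show ?thesis unfolding e using card_Fac_dec[of "[La]" 0] card_Fac_a by simp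
qed

lemma inv:
  "card (Fac (c m)) = fib (m + 1) \<and> card (Fac (c m @ [La])) = fib (m + 1)
   \<and> card (Fac (c m @ [Lb])) = fib m
   \<and> card (Fac (c m @ [La, Lb])) = (if even m then fib m + 1 else fib m - 1)
   \<and> card (Fac (c m @ [Lb, La])) = (if even m then fib (m + 1) - 1 else fib (m + 1) + 1)"
proof (induction m)
  case 0
  then show ?case by (simp add: card_Fac_Nil card_Fac_a card_Fac_b card_Fac_ab)
next
  case (Suc m)
  have fp: "odd m \<Longrightarrow> fib m > 0" by (simp add: fib_neq_0_nat odd_pos)
  show ?case using Suc t1[of m] t2[of m] t3[of m] t4[of m] t5[of m] fp by auto
qed

lemma length_fw: "length (fw i) = fib (i + 2)"
  by (induction i rule: fw.induct) (auto simp: numeral_2_eq_2)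

lemma fw_prefix_Suc: "\<exists>z. fw (Suc i) = fw i @ z"
  by (cases i) auto

lemma fw_prefix: "i \<le> j \<Longrightarrow> \<exists>z. fw j = fw i @ z"
proof (induction j rule: dec_induct)
  case base
  then show ?case by simp
next
  case (step j)
  then show ?case using fw_prefix_Suc[of j] by (metis append.assoc)
qed

lemma n_le_fib: "n \<le> fib (Suc n)"
proof (induction n rule: less_induct)
  case (less n)
  show ?case
  proof (cases n)
    case 0
    then show ?thesis by simp
  next
    case (Suc n')
    show ?thesis
    proof (cases n')
      case 0
      then show ?thesis using Suc by simp
    next
      case (Suc n'')
      have h: "Suc n'' \<le> fib (Suc (Suc n''))" by (rule less.IH) (simp add: \<open>n = Suc n'\<close> Suc)
      moreover have "fib (Suc n'') \<ge> 1" using fib_neq_0_nat[of "Suc n''"] by simp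
      moreover have "fib (Suc (Suc (Suc n''))) = fib (Suc (Suc n'')) + fib (Suc n'')"
        by (rule fib.simps(3))
      moreover have nn: "n = Suc (Suc n'')" using \<open>n = Suc n'\<close> Suc by simp
      ultimately show ?thesis unfolding nn by linarith
    qed
  qed
qed

lemma fprefix_fib:
  assumes "n \<ge> 2"
  shows "fprefix (fib n) = fw (n - 2)"
proof -
  have "n - 2 \<le> fib n" using n_le_fib[of "n - 1"] assms by simp
  then obtain z where z: "fw (fib n) = fw (n - 2) @ z" using fw_prefix by blast
  have "n - 2 + 2 = n" using assms by simp
  then have "length (fw (n - 2)) = fib n" using length_fw[of "n - 2"] by metis
  then show ?thesis unfolding fprefix_def z by simp
qed

lemma V_Fac: "V N = card (Fac (fprefix N))"
  by (simp add: V_def Fac_def)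

theorem corollary2:
  fixes k :: nat
  assumes "k \<ge> 1"
  shows "V (fib (2*k)) = fib (2*k - 2) + 1 \<and> V (fib (2*k+1)) = fib (2*k - 2) + 1"
proof
  show "V (fib (2*k)) = fib (2*k - 2) + 1"
  proof (cases "k = 1")
    case True
    then show ?thesis using fprefix_fib[of 2] by (simp add: V_Fac card_Fac_a)
  next
    case False
    then have k2: "k \<ge> 2" using assms by simp
    have e: "2 * k - 2 = Suc (2 * k - 3)" using k2 by simp
    have o: "odd (2 * k - 3)" using k2 by presburger
    have "fprefix (fib (2*k)) = fw (2 * k - 2)" using fprefix_fib k2 by simp
    also have "\<dots> = c (2 * k - 3) @ [Lb, La]" unfolding e fw_c using o by simp
    finally show ?thesis using inv[of "2 * k - 3"] o e by (simp add: V_Fac)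
  qed
next
  have e: "2 * k + 1 - 2 = Suc (2 * k - 2)" using assms by simp
  have o: "even (2 * k - 2)" using assms by presburger
  have "fprefix (fib (2*k+1)) = fw (2 * k + 1 - 2)" using fprefix_fib assms by simp
  also have "\<dots> = c (2 * k - 2) @ [La, Lb]" unfolding e fw_c using o by simp
  finally show "V (fib (2*k+1)) = fib (2*k - 2) + 1" using inv[of "2 * k - 2"] o by (simp add: V_Fac)
qed

end
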